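(* For every integer $t$, there exists a connected non-bipartite graph whose adjacency matrix has exactly four distinct eigenvalues and which has at least $t$ distinct valencies.
   Context: Graphs are finite, simple and undirected; eigenvalues of a graph are those of its adjacency matrix; valencies are vertex degrees. *)

theory Defs
  imports "Jordan_Normal_Form.Char_Poly"
begin

text \<open>A finite simple graph on the vertex set {0..<n}, given by an edge relation E
  (only its restriction to {0..<n} matters).\<close>

definition simple_graph :: "nat \<Rightarrow> (nat \<Rightarrow> nat \<Rightarrow> bool) \<Rightarrow> bool" where
  "simple_graph n E \<longleftrightarrow> (\<forall>u<n. \<forall>v<n. E u v \<longleftrightarrow> E v u) \<and> (\<forall>u<n. \<not> E u u)"

definition adj_matrix :: "nat \<Rightarrow> (nat \<Rightarrow> nat \<Rightarrow> bool) \<Rightarrow> real mat" where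
  "adj_matrix n E = mat n n (\<lambda>(i, j). if E i j then 1 else 0)"

definition graph_eigenvalues :: "nat \<Rightarrow> (nat \<Rightarrow> nat \<Rightarrow> bool) \<Rightarrow> real set" where
  "graph_eigenvalues n E = {k. eigenvalue (adj_matrix n E) k}"

definition connected_graph :: "nat \<Rightarrow> (nat \<Rightarrow> nat \<Rightarrow> bool) \<Rightarrow> bool" where
  "connected_graph n E \<longleftrightarrow> n \<ge> 1 \<and>
     (\<forall>u<n. \<forall>v<n. (\<lambda>x y. x < n \<and> y < n \<and> E x y)\<^sup>*\<^sup>* u v)"

definition bipartite_graph :: "nat \<Rightarrow> (nat \<Rightarrow> nat \<Rightarrow> bool) \<Rightarrow> bool" where
  "bipartite_graph n E \<longleftrightarrow> (\<exists>c :: nat \<Rightarrow> bool. \<forall>u<n. \<forall>v<n. E u v \<longrightarrow> c u \<noteq> c v)"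

definition valency :: "nat \<Rightarrow> (nat \<Rightarrow> nat \<Rightarrow> bool) \<Rightarrow> nat \<Rightarrow> nat" where
  "valency n E v = card {u. u < n \<and> E v u}"

definition valencies :: "nat \<Rightarrow> (nat \<Rightarrow> nat \<Rightarrow> bool) \<Rightarrow> nat set" where
  "valencies n E = valency n E ` {0..<n}"

end

theory Submission
  imports Defs
begin

lemma eig_char:
  "eigenvalue (adj_matrix n E) k \<longleftrightarrow>
   (\<exists>w. (\<exists>i<n. w i \<noteq> 0) \<and> (\<forall>i<n. (\<Sum>j | j<n \<and> E i j. w j) = k * w i))"
proof -
  have mv: "(adj_matrix n E *\<^sub>v vec n w) $ i = (\<Sum>j | j<n \<and> E i j. w j)" if "i < n" for w i
  proof -
    have "(adj_matrix n E *\<^sub>v vec n w) $ i = (\<Sum>j\<in>{0..<n}. (if E i j then 1 else 0) * w j)"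
      using that by (simp add: adj_matrix_def scalar_prod_def row_def)
    also have "\<dots> = (\<Sum>j\<in>{0..<n}. if E i j then w j else 0)" by (intro sum.cong) auto
    also have "\<dots> = (\<Sum>j | j<n \<and> E i j. w j)"
      by (simp add: sum.If_cases atLeast0LessThan Collect_conj_eq lessThan_def Int_commute)
    finally show ?thesis .
  qed
  have dimA: "dim_row (adj_matrix n E) = n" by (simp add: adj_matrix_def)
  show ?thesis
  proof
    assume "eigenvalue (adj_matrix n E) k"
    then obtain u where u: "u \<in> carrier_vec n" "u \<noteq> 0\<^sub>v n" "adj_matrix n E *\<^sub>v u = k \<cdot>\<^sub>v u"
      unfolding eigenvalue_def eigenvector_def dimA by auto
    define w where "w = (\<lambda>i. u $ i)"
    have uw: "u = vec n w" using u(1) unfolding w_def by auto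
    have "\<exists>i<n. w i \<noteq> 0"
    proof (rule ccontr)
      assume "\<not> ?thesis"
      hence "u = 0\<^sub>v n" using u(1) unfolding w_def by (intro eq_vecI) auto
      with u(2) show False by simp
    qed
    moreover have "\<forall>i<n. (\<Sum>j | j<n \<and> E i j. w j) = k * w i"
    proof (intro allI impI)
      fix i assume i: "i < n"
      have "(adj_matrix n E *\<^sub>v u) $ i = (k \<cdot>\<^sub>v u) $ i" using u(3) by simp
      thus "(\<Sum>j | j<n \<and> E i j. w j) = k * w i" using mv[OF i, of w] i u(1) uw by simp
    qed
    ultimately show "\<exists>w. (\<exists>i<n. w i \<noteq> 0) \<and> (\<forall>i<n. (\<Sum>j | j<n \<and> E i j. w j) = k * w i)" by blast
  next
    assume "\<exists>w. (\<exists>i<n. w i \<noteq> 0) \<and> (\<forall>i<n. (\<Sum>j | j<n \<and> E i j. w j) = k * w i)"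
    then obtain w where w: "\<exists>i<n. w i \<noteq> 0" "\<forall>i<n. (\<Sum>j | j<n \<and> E i j. w j) = k * w i" by blast
    have "eigenvector (adj_matrix n E) (vec n w) k"
      unfolding eigenvector_def dimA
    proof (intro conjI)
      show "vec n w \<in> carrier_vec n" by simp
      show "vec n w \<noteq> 0\<^sub>v n"
      proof
        assume "vec n w = 0\<^sub>v n"
        with w(1) obtain i where "i<n" "w i \<noteq> 0" by blast
        hence "vec n w $ i \<noteq> 0\<^sub>v n $ i" by simp
        with \<open>vec n w = 0\<^sub>v n\<close> show False by simp
      qed
      show "adj_matrix n E *\<^sub>v vec n w = k \<cdot>\<^sub>v vec n w"
      proof (rule eq_vecI)
        fix i assume "i < dim_vec (k \<cdot>\<^sub>v vec n w)"
        hence i: "i < n" by simp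
        show "(adj_matrix n E *\<^sub>v vec n w) $ i = (k \<cdot>\<^sub>v vec n w) $ i"
          using mv[OF i, of w] w(2) i by simp
      qed (simp add: adj_matrix_def)
    qed
    thus "eigenvalue (adj_matrix n E) k" unfolding eigenvalue_def by blast
  qed
qed

definition GE :: "nat \<Rightarrow> (nat \<Rightarrow> nat set) \<Rightarrow> nat \<Rightarrow> nat \<Rightarrow> bool" where
  "GE v F x y = (if x < v then (if y < v then x \<noteq> y else x \<in> F (y - v))
                 else (y < v \<and> y \<in> F (x - v)))"

locale dsgn =
  fixes v m :: nat and F :: "nat \<Rightarrow> nat set" and \<beta> :: nat
  assumes v3: "v \<ge> 3" and b2: "\<beta> \<ge> 2"
    and Fsub: "\<And>b. b < m \<Longrightarrow> F b \<subseteq> {..<v}"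
    and Fne: "\<And>b. b < m \<Longrightarrow> F b \<noteq> {}"
    and cnt: "\<And>p q. p < v \<Longrightarrow> q < v \<Longrightarrow>
        card {b. b < m \<and> p \<in> F b \<and> q \<in> F b} = (if p = q then \<beta>^2 else \<beta>)"
    and dup: "\<exists>b1<m. \<exists>b2<m. b1 \<noteq> b2 \<and> F b1 = F b2"
begin

abbreviation "E \<equiv> GE v F"
abbreviation "n \<equiv> v + m"

lemma nbr_point: assumes p: "p < v" shows "{j. j < n \<and> E p j} = ({..<v} - {p}) \<union> ((+) v ` {b. b < m \<and> p \<in> F b})"
proof (rule Set.set_eqI)
  fix j
  show "j \<in> {j. j < n \<and> E p j} \<longleftrightarrow> j \<in> ({..<v} - {p}) \<union> ((+) v ` {b. b < m \<and> p \<in> F b})"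
  proof (cases "j < v")
    case True thus ?thesis using p unfolding GE_def by auto
  next
    case False
    then obtain b where jb: "j = v + b" by (metis le_add_diff_inverse not_less)
    thus ?thesis using p unfolding GE_def by (auto simp: image_iff)
  qed
qed

lemma nbr_block: "b < m \<Longrightarrow> {j. j < n \<and> E (v + b) j} = F b"
  unfolding GE_def using Fsub[of b] by auto

lemma sum_point:
  assumes "p < v"
  shows "(\<Sum>j | j < n \<and> E p j. w j) = (\<Sum>q\<in>{..<v} - {p}. w q) + (\<Sum>b | b < m \<and> p \<in> F b. w (v + b))"
proof -
  have "(\<Sum>j | j < n \<and> E p j. w j) = (\<Sum>q\<in>{..<v} - {p}. w q) + (\<Sum>j\<in>(+) v ` {b. b < m \<and> p \<in> F b}. w j)"
    unfolding nbr_point[OF assms] by (rule sum.union_disjoint) auto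
  also have "(\<Sum>j\<in>(+) v ` {b. b < m \<and> p \<in> F b}. w j) = (\<Sum>b | b < m \<and> p \<in> F b. w (v + b))"
    by (subst sum.reindex) (auto simp: inj_on_def)
  finally show ?thesis .
qed

lemma dcount:
  assumes p: "p < v"
  shows "(\<Sum>b | b < m \<and> p \<in> F b. \<Sum>q\<in>F b. x q) = (real \<beta>^2 - real \<beta>) * x p + real \<beta> * (\<Sum>q<v. x q)"
proof -
  have "(\<Sum>b | b < m \<and> p \<in> F b. \<Sum>q\<in>F b. x q) = (\<Sum>b | b < m \<and> p \<in> F b. \<Sum>q<v. if q \<in> F b then x q else 0)"
  proof (rule sum.cong[OF refl])
    fix b assume "b \<in> {b. b < m \<and> p \<in> F b}"
    hence "F b \<subseteq> {..<v}" using Fsub by auto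
    thus "(\<Sum>q\<in>F b. x q) = (\<Sum>q<v. if q \<in> F b then x q else 0)"
      by (simp add: sum.If_cases Int_absorb1 Int_absorb2)
  qed
  also have "\<dots> = (\<Sum>q<v. \<Sum>b | b < m \<and> p \<in> F b. if q \<in> F b then x q else 0)"
    by (rule sum.swap)
  also have "\<dots> = (\<Sum>q<v. x q * real (if p = q then \<beta>^2 else \<beta>))"
  proof (rule sum.cong[OF refl])
    fix q assume q: "q \<in> {..<v}"
    have "(\<Sum>b | b < m \<and> p \<in> F b. if q \<in> F b then x q else 0) = (\<Sum>b | b < m \<and> p \<in> F b \<and> q \<in> F b. x q)"
      by (simp add: sum.If_cases Int_def conj_assoc)
    also have "\<dots> = x q * real (card {b. b < m \<and> p \<in> F b \<and> q \<in> F b})" by simp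
    finally show "(\<Sum>b | b < m \<and> p \<in> F b. if q \<in> F b then x q else 0) = x q * real (if p = q then \<beta>^2 else \<beta>)"
      using cnt[OF p] q by simp
  qed
  also have "\<dots> = (\<Sum>q<v. real \<beta> * x q + (if q = p then (real \<beta>^2 - real \<beta>) * x q else 0))"
    by (rule sum.cong) (auto simp: algebra_simps)
  also have "\<dots> = real \<beta> * (\<Sum>q<v. x q) + (real \<beta>^2 - real \<beta>) * x p"
    using p by (simp add: sum.distrib sum_distrib_left)
  finally show ?thesis by simp
qed

lemma eqs:
  fixes w :: "nat \<Rightarrow> real"
  shows "(\<forall>i<n. (\<Sum>j | j < n \<and> E i j. w j) = k * w i) \<longleftrightarrow>
   (\<forall>p<v. (\<Sum>q<v. w q) - w p + (\<Sum>b | b < m \<and> p \<in> F b. w (v + b)) = k * w p) \<and>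
   (\<forall>b<m. (\<Sum>q\<in>F b. w q) = k * w (v + b))"
proof -
  have sp: "(\<Sum>j | j < n \<and> E p j. w j) = (\<Sum>q<v. w q) - w p + (\<Sum>b | b < m \<and> p \<in> F b. w (v + b))"
    if "p < v" for p
    using that by (simp add: sum_point sum_diff1)
  have sb: "(\<Sum>j | j < n \<and> E (v + b) j. w j) = (\<Sum>q\<in>F b. w q)" if "b < m" for b
    using that by (simp add: nbr_block)
  show ?thesis
  proof
    assume A: "\<forall>i<n. (\<Sum>j | j < n \<and> E i j. w j) = k * w i"
    show "(\<forall>p<v. (\<Sum>q<v. w q) - w p + (\<Sum>b | b < m \<and> p \<in> F b. w (v + b)) = k * w p) \<and>
      (\<forall>b<m. (\<Sum>q\<in>F b. w q) = k * w (v + b))"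
    proof (intro conjI allI impI)
      fix b assume "b < m"
      thus "(\<Sum>q\<in>F b. w q) = k * w (v + b)" using sb[of b] A by auto
    next
      fix p assume "p < v"
      thus "(\<Sum>q<v. w q) - w p + (\<Sum>b | b < m \<and> p \<in> F b. w (v + b)) = k * w p" using sp[of p] A by auto
    qed
  next
    assume A: "(\<forall>p<v. (\<Sum>q<v. w q) - w p + (\<Sum>b | b < m \<and> p \<in> F b. w (v + b)) = k * w p) \<and>
      (\<forall>b<m. (\<Sum>q\<in>F b. w q) = k * w (v + b))"
    hence P: "\<forall>p<v. (\<Sum>q<v. w q) - w p + (\<Sum>b | b < m \<and> p \<in> F b. w (v + b)) = k * w p"
      and B: "\<forall>b<m. (\<Sum>q\<in>F b. w q) = k * w (v + b)" by auto
    show "\<forall>i<n. (\<Sum>j | j < n \<and> E i j. w j) = k * w i"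
    proof (intro allI impI)
      fix i assume i: "i < n"
      show "(\<Sum>j | j < n \<and> E i j. w j) = k * w i"
      proof (cases "i < v")
        case True thus ?thesis using P sp by auto
      next
        case False
        define b where "b = i - v"
        have ib: "i = v + b" "b < m" using False i unfolding b_def by auto
        thus ?thesis using B sb by auto
      qed
    qed
  qed
qed

lemma eig_sub:
  assumes "eigenvalue (adj_matrix n E) k"
  shows "k \<in> {0, - real \<beta>, real \<beta> - 1, real \<beta> - 1 + real v}"
proof (rule ccontr)
  assume kn: "k \<notin> {0, - real \<beta>, real \<beta> - 1, real \<beta> - 1 + real v}"
  from assms obtain w where nz: "\<exists>i<n. w i \<noteq> 0" and eq: "\<forall>i<n. (\<Sum>j | j < n \<and> E i j. w j) = k * w i"
    unfolding eig_char by blast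
  from eq[unfolded eqs] have P: "\<And>p. p<v \<Longrightarrow> (\<Sum>q<v. w q) - w p + (\<Sum>b | b < m \<and> p \<in> F b. w (v + b)) = k * w p"
    and Bq: "\<And>b. b<m \<Longrightarrow> (\<Sum>q\<in>F b. w q) = k * w (v + b)" by auto
  have k0: "k \<noteq> 0" using kn by auto
  define S where "S = (\<Sum>q<v. w q)"
  define B where "B = real \<beta>"
  define c where "c = k^2 + k - (B^2 - B)"
  have wb: "w (v + b) = (\<Sum>q\<in>F b. w q) / k" if "b < m" for b
    using Bq[OF that] k0 by (simp add: field_simps)
  have key: "c * w p = (k + B) * S" if p: "p < v" for p
  proof -
    have "(\<Sum>b | b < m \<and> p \<in> F b. w (v + b)) = (\<Sum>b | b < m \<and> p \<in> F b. (\<Sum>q\<in>F b. w q) / k)"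
      by (rule sum.cong) (auto simp: wb)
    also have "\<dots> = (\<Sum>b | b < m \<and> p \<in> F b. (\<Sum>q\<in>F b. w q)) / k" by (simp add: sum_divide_distrib)
    also have "\<dots> = ((B^2 - B) * w p + B * S) / k" unfolding dcount[OF p] B_def S_def by simp
    finally have "S - w p + ((B^2 - B) * w p + B * S) / k = k * w p" using P[OF p] unfolding S_def by simp
    hence "k * (S - w p) + ((B^2 - B) * w p + B * S) = k * (k * w p)" using k0 by (simp add: field_simps)
    thus ?thesis unfolding c_def by (simp add: algebra_simps power2_eq_square)
  qed
  have cf: "c = (k + B) * (k - B + 1)" unfolding c_def by (simp add: algebra_simps power2_eq_square)
  have kB: "k \<noteq> - B" "k \<noteq> B - 1" "k \<noteq> B - 1 + real v" using kn unfolding B_def by auto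
  have f1: "k + B \<noteq> 0" "k - B + 1 \<noteq> 0" "k - B + 1 - real v \<noteq> 0" using kB by linarith+
  have c0: "c \<noteq> 0" unfolding cf using f1 by simp
  obtain p0 where p0: "p0 < v" "w p0 \<noteq> 0"
  proof (rule ccontr)
    assume "\<not> thesis"
    hence z: "\<And>p. p < v \<Longrightarrow> w p = 0" using that by blast
    have "w i = 0" if "i < n" for i
    proof (cases "i < v")
      case True thus ?thesis using z by auto
    next
      case False
      define b where "b = i - v"
      have ib: "i = v + b" "b < m" using False that unfolding b_def by auto
      have "(\<Sum>q\<in>F b. w q) = 0" using Fsub[OF ib(2)] z by (intro sum.neutral) auto
      thus ?thesis using wb[OF ib(2)] ib by simp
    qed
    with nz show False by auto
  qed
  have wc: "w p = (k + B) * S / c" if "p < v" for p using key[OF that] c0 by (simp add: field_simps)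
  have "(\<Sum>q<v. w q) = (\<Sum>q<v. (k + B) * S / c)" by (rule sum.cong) (use wc in auto)
  hence "S = (\<Sum>q<v. (k + B) * S / c)" unfolding S_def[symmetric] .
  hence Sv: "S = real v * ((k + B) * S / c)" by simp
  have S0: "S \<noteq> 0" using wc[OF p0(1)] p0(2) by auto
  have "S * c = S * (real v * (k + B))" using Sv c0 by (simp add: field_simps)
  hence "c = real v * (k + B)" using S0 by simp
  hence "(k + B) * (k - B + 1 - real v) = 0" unfolding cf by (simp add: algebra_simps)
  thus False using f1 by simp
qed

lemma eig_gen:
  fixes x :: "nat \<Rightarrow> real"
  assumes k0: "k \<noteq> 0" and nz: "\<exists>p<v. x p \<noteq> 0"
    and pe: "\<And>p. p < v \<Longrightarrow> (\<Sum>q<v. x q) - x p + ((real \<beta>^2 - real \<beta>) * x p + real \<beta> * (\<Sum>q<v. x q)) / k = k * x p"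
  shows "eigenvalue (adj_matrix n E) k"
proof -
  define w where "w i = (if i < v then x i else (\<Sum>q\<in>F (i - v). x q) / k)" for i
  have wv: "w (v + b) = (\<Sum>q\<in>F b. x q) / k" for b unfolding w_def by simp
  have Fx: "(\<Sum>q\<in>F b. w q) = (\<Sum>q\<in>F b. x q)" if "b < m" for b
    using Fsub[OF that] by (intro sum.cong) (auto simp: w_def)
  have sx: "(\<Sum>q<v. w q) = (\<Sum>q<v. x q)" by (intro sum.cong) (auto simp: w_def)
  show ?thesis unfolding eig_char
  proof (rule exI[of _ w], intro conjI)
    show "\<exists>i<n. w i \<noteq> 0" using nz unfolding w_def by force
    have B: "\<forall>b<m. (\<Sum>q\<in>F b. w q) = k * w (v + b)" using k0 by (simp add: Fx wv)
    have P: "\<forall>p<v. (\<Sum>q<v. w q) - w p + (\<Sum>b | b < m \<and> p \<in> F b. w (v + b)) = k * w p"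
    proof (intro allI impI)
      fix p assume p: "p < v"
      have "(\<Sum>b | b < m \<and> p \<in> F b. w (v + b)) = (\<Sum>b | b < m \<and> p \<in> F b. (\<Sum>q\<in>F b. x q)) / k"
        by (simp add: wv sum_divide_distrib)
      also have "\<dots> = ((real \<beta>^2 - real \<beta>) * x p + real \<beta> * (\<Sum>q<v. x q)) / k" using dcount[OF p] by simp
      finally show "(\<Sum>q<v. w q) - w p + (\<Sum>b | b < m \<and> p \<in> F b. w (v + b)) = k * w p"
        using pe[OF p] p by (simp add: sx w_def)
    qed
    show "\<forall>i<n. (\<Sum>j | j < n \<and> E i j. w j) = k * w i" using eqs[of w k] P B by blast
  qed
qed

lemma eig_zero: "eigenvalue (adj_matrix n E) 0"
proof -
  obtain b1 b2 where b: "b1 < m" "b2 < m" "b1 \<noteq> b2" "F b1 = F b2" using dup by blast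
  define w :: "nat \<Rightarrow> real" where "w i = (if i = v + b1 then 1 else 0) - (if i = v + b2 then 1 else 0)" for i
  have wp: "w p = 0" if "p < v" for p using that unfolding w_def by auto
  have wb: "w (v + b) = (if b = b1 then 1 else 0) - (if b = b2 then 1 else 0)" for b unfolding w_def by simp
  show ?thesis unfolding eig_char
  proof (rule exI[of _ w], intro conjI)
    show "\<exists>i<n. w i \<noteq> 0" using b unfolding w_def by (intro exI[of _ "v + b1"]) auto
    have B: "\<forall>b<m. (\<Sum>q\<in>F b. w q) = 0 * w (v + b)" using Fsub wp by (auto intro!: sum.neutral)
    have P: "\<forall>p<v. (\<Sum>q<v. w q) - w p + (\<Sum>b | b < m \<and> p \<in> F b. w (v + b)) = 0 * w p"
    proof (intro allI impI)
      fix p assume p: "p < v"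
      have "(\<Sum>b | b < m \<and> p \<in> F b. w (v + b)) =
         (\<Sum>b | b < m \<and> p \<in> F b. if b = b1 then 1 else 0) - (\<Sum>b | b < m \<and> p \<in> F b. if b = b2 then 1 else 0)"
        unfolding wb by (simp add: sum_subtractf)
      also have "\<dots> = 0" using b by (simp add: sum.delta)
      finally show "(\<Sum>q<v. w q) - w p + (\<Sum>b | b < m \<and> p \<in> F b. w (v + b)) = 0 * w p"
        using p wp by simp
    qed
    show "\<forall>i<n. (\<Sum>j | j < n \<and> E i j. w j) = 0 * w i" using eqs[of w 0] P B by blast
  qed
qed

lemma eig_quad:
  assumes k: "k = - real \<beta> \<or> k = real \<beta> - 1"
  shows "eigenvalue (adj_matrix n E) k"
proof -
  define x :: "nat \<Rightarrow> real" where "x q = (if q = 0 then 1 else 0) - (if q = 1 then 1 else 0)" for q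
  have S: "(\<Sum>q<v. x q) = 0" using v3 unfolding x_def by (simp add: sum_subtractf sum.delta)
  have k0: "k \<noteq> 0" using k b2 by auto
  have kk: "k * k + k = real \<beta>^2 - real \<beta>" using k by (elim disjE) (simp_all only: power2_eq_square, (simp add: algebra_simps)+)
  show ?thesis
  proof (rule eig_gen[OF k0])
    show "\<exists>p<v. x p \<noteq> 0" using v3 unfolding x_def by (intro exI[of _ 0]) auto
    fix p assume "p < v"
    have e: "(real \<beta>^2 - real \<beta>) * x p = k * ((k + 1) * x p)"
      unfolding kk[symmetric] by (simp add: algebra_simps)
    have "(real \<beta>^2 - real \<beta>) * x p / k = (k + 1) * x p" using k0 by (simp add: e)
    hence "- x p + (real \<beta>^2 - real \<beta>) * x p / k = k * x p" by (simp add: algebra_simps)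
    thus "(\<Sum>q<v. x q) - x p + ((real \<beta>^2 - real \<beta>) * x p + real \<beta> * (\<Sum>q<v. x q)) / k = k * x p"
      unfolding S by simp
  qed
qed

lemma eig_big: "eigenvalue (adj_matrix n E) (real \<beta> - 1 + real v)"
proof (rule eig_gen[where x = "\<lambda>_. 1"])
  show k0: "real \<beta> - 1 + real v \<noteq> 0" using v3 b2 by simp
  show "\<exists>p<v. (1::real) \<noteq> 0" using v3 by (intro exI[of _ 0]) auto
  fix p assume "p < v"
  have "real v - 1 + (real \<beta>^2 - real \<beta> + real \<beta> * real v) / (real \<beta> - 1 + real v) = real \<beta> - 1 + real v"
    using k0 by (simp add: field_simps) (simp add: algebra_simps power2_eq_square)
  thus "(\<Sum>q<v. (1::real)) - 1 + ((real \<beta>^2 - real \<beta>) * 1 + real \<beta> * (\<Sum>q<v. 1)) / (real \<beta> - 1 + real v) =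
      (real \<beta> - 1 + real v) * 1" by simp
qed

lemma eigs: "graph_eigenvalues n E = {0, - real \<beta>, real \<beta> - 1, real \<beta> - 1 + real v}"
  unfolding graph_eigenvalues_def using eig_sub eig_zero eig_quad eig_big by auto

lemma card_eigs: "card (graph_eigenvalues n E) = 4"
  unfolding eigs using b2 v3 by auto

lemma simple: "simple_graph n E"
  unfolding simple_graph_def GE_def by auto

lemma not_bip: "\<not> bipartite_graph n E"
proof
  assume "bipartite_graph n E"
  then obtain c :: "nat \<Rightarrow> bool" where c: "\<forall>u<n. \<forall>w<n. E u w \<longrightarrow> c u \<noteq> c w"
    unfolding bipartite_graph_def by blast
  have "c 0 \<noteq> c 1" "c 1 \<noteq> c 2" "c 0 \<noteq> c 2" using c v3 unfolding GE_def by auto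
  thus False by auto
qed

lemma conn: "connected_graph n E"
proof -
  define R where "R = (\<lambda>x y. x < n \<and> y < n \<and> E x y)"
  have R0: "R\<^sup>*\<^sup>* u 0 \<and> R\<^sup>*\<^sup>* 0 u" if u: "u < n" for u
  proof (cases "u < v")
    case True
    show ?thesis
    proof (cases "u = 0")
      case False
      hence "R u 0" "R 0 u" using True v3 unfolding R_def GE_def by auto
      thus ?thesis by auto
    qed auto
  next
    case False
    define b where "b = u - v"
    have ub: "u = v + b" "b < m" using False u unfolding b_def by auto
    obtain p where p: "p \<in> F b" using Fne[OF ub(2)] by blast
    have pv: "p < v" using Fsub[OF ub(2)] p by auto
    have "R u p" "R p u" using ub p pv unfolding R_def GE_def by auto
    moreover have "R\<^sup>*\<^sup>* p 0 \<and> R\<^sup>*\<^sup>* 0 p"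
    proof (cases "p = 0")
      case False
      hence "R p 0" "R 0 p" using pv v3 unfolding R_def GE_def by auto
      thus ?thesis by auto
    qed auto
    ultimately show ?thesis by (meson converse_rtranclp_into_rtranclp rtranclp.rtrancl_into_rtrancl)
  qed
  show ?thesis unfolding connected_graph_def
  proof (intro conjI allI impI)
    show "1 \<le> n" using v3 by simp
    fix u w assume "u < n" "w < n"
    with R0 have "R\<^sup>*\<^sup>* u 0" "R\<^sup>*\<^sup>* 0 w" by auto
    thus "(\<lambda>x y. x < n \<and> y < n \<and> E x y)\<^sup>*\<^sup>* u w" unfolding R_def by (rule rtranclp_trans)
  qed
qed

lemma vals: "(\<lambda>b. card (F b)) ` {..<m} \<subseteq> valencies n E"
proof
  fix x assume "x \<in> (\<lambda>b. card (F b)) ` {..<m}"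
  then obtain b where b: "b < m" "x = card (F b)" by auto
  have "valency n E (v + b) = x" unfolding valency_def using nbr_block[OF b(1)] b(2) by simp
  moreover have "v + b \<in> {0..<n}" using b by simp
  ultimately show "x \<in> valencies n E" unfolding valencies_def by force
qed

end


lemma card_supsets:
  assumes X: "finite X" and P: "P \<subseteq> X"
  shows "card {B. B \<subseteq> X \<and> P \<subseteq> B} = 2 ^ (card X - card P)"
proof -
  have "bij_betw (\<lambda>C. C \<union> P) (Pow (X - P)) {B. B \<subseteq> X \<and> P \<subseteq> B}"
  proof (rule bij_betw_byWitness[where f' = "\<lambda>B. B - P"])
  qed (use P in auto)
  hence "card {B. B \<subseteq> X \<and> P \<subseteq> B} = card (Pow (X - P))" by (simp add: bij_betw_same_card)
  also have "\<dots> = 2 ^ card (X - P)" using X by (simp add: card_Pow)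
  also have "card (X - P) = card X - card P" using X P by (simp add: card_Diff_subset finite_subset)
  finally show ?thesis .
qed

lemma card_block_range:
  assumes s: "s > 0" and p: "p < v"
  shows "card {b. M \<le> b \<and> b < M + s * v \<and> (b - M) div s = p} = s"
proof -
  have "{b. M \<le> b \<and> b < M + s * v \<and> (b - M) div s = p} = {M + p * s..<M + p * s + s}"
  proof (rule Set.set_eqI)
    fix b
    show "b \<in> {b. M \<le> b \<and> b < M + s * v \<and> (b - M) div s = p} \<longleftrightarrow> b \<in> {M + p * s..<M + p * s + s}"
    proof
      assume "b \<in> {b. M \<le> b \<and> b < M + s * v \<and> (b - M) div s = p}"
      hence b: "M \<le> b" "(b - M) div s = p" by auto
      have "p * s \<le> b - M" using b(2) by (metis div_times_less_eq_dividend)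
      moreover have "b - M < p * s + s" using b(2) s
        by (metis add.commute div_less_iff_less_mult mult.commute mult_Suc_right lessI)
      ultimately show "b \<in> {M + p * s..<M + p * s + s}" using b(1) by auto
    next
      assume "b \<in> {M + p * s..<M + p * s + s}"
      hence b: "M + p * s \<le> b" "b < M + p * s + s" by auto
      define j where "j = b - M - p * s"
      have bj: "b - M = p * s + j" "j < s" using b unfolding j_def by auto
      have "(b - M) div s = p" using bj s by simp
      moreover have "p * s + s \<le> s * v" using p
        by (metis Suc_leI add.commute mult.commute mult_Suc_right mult_le_mono2)
      ultimately show "b \<in> {b. M \<le> b \<and> b < M + s * v \<and> (b - M) div s = p}" using b by auto
    qed
  qed
  thus ?thesis by simp
qed


lemma construction:
  fixes a :: nat
  shows "\<exists>m F. dsgn (a + 4) m F (2 ^ (a + 2)) \<and> {1..a + 4} \<subseteq> (\<lambda>b. card (F b)) ` {..<m}"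
proof -
  define v where "v = a + 4"
  define \<beta> :: nat where "\<beta> = 2 ^ (a + 2)"
  define s :: nat where "s = 2 ^ (2 * a + 4) - 2 ^ (a + 3)"
  define SS where "SS = {B. B \<subseteq> {..<v} \<and> B \<noteq> {}}"
  define M where "M = card SS"
  have finSS: "finite SS" unfolding SS_def by (rule finite_subset[of _ "Pow {..<v}"]) auto
  obtain g where g: "bij_betw g {0..<M} SS" using ex_bij_betw_nat_finite[OF finSS] unfolding M_def by blast
  define F where "F b = (if b < M then g b else {(b - M) div s})" for b
  define m where "m = M + s * v"
  have pw: "(2::nat) ^ (2 * a + 4) = 2 ^ (a + 3) * 2 ^ (a + 1)"
  proof -
    have "(2::nat) ^ (a + 3) * 2 ^ (a + 1) = 2 ^ ((a + 3) + (a + 1))" by (rule power_add[symmetric])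
    also have "(a + 3) + (a + 1) = 2 * a + 4" by simp
    finally show ?thesis by simp
  qed
  have "(2::nat) ^ (a + 3) * 2 \<le> 2 ^ (a + 3) * 2 ^ (a + 1)"
    by (intro mult_le_mono2) (simp add: self_le_power)
  moreover have "s = 2 ^ (a + 3) * 2 ^ (a + 1) - 2 ^ (a + 3)" unfolding s_def pw ..
  ultimately have s_ge: "s \<ge> 2 ^ (a + 3)"
    by (metis (no_types) add_le_imp_le_diff mult_2_right mult.commute)
  have s2: "s \<ge> 2" using s_ge by (metis le_trans one_le_numeral power_increasing le_add2 power_one_right)
  have gS: "g b \<in> SS" if "b < M" for b using g that unfolding bij_betw_def by auto
  have cntg: "card {b. b < M \<and> P (g b)} = card {B \<in> SS. P B}" for P
  proof -
    have "inj_on g {b. b < M \<and> P (g b)}" using g unfolding bij_betw_def by (rule inj_on_subset[OF conjunct1]) auto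
    moreover have "g ` {b. b < M \<and> P (g b)} = {B \<in> SS. P B}"
    proof (rule Set.set_eqI)
      fix B show "B \<in> g ` {b. b < M \<and> P (g b)} \<longleftrightarrow> B \<in> {B \<in> SS. P B}"
        using g unfolding bij_betw_def by (auto simp: image_iff)
    qed
    ultimately show ?thesis by (metis card_image)
  qed
  have "dsgn v m F \<beta>"
  proof
    show "3 \<le> v" unfolding v_def by simp
    have "(2::nat)^1 \<le> 2^(a+2)" by (rule power_increasing) auto
    thus "2 \<le> \<beta>" unfolding \<beta>_def by simp
    fix b assume b: "b < m"
    show "F b \<subseteq> {..<v}"
    proof (cases "b < M")
      case True thus ?thesis using gS[OF True] unfolding F_def SS_def by auto
    next
      case False
      have "b - M < s * v" using b False unfolding m_def by simp
      hence "(b - M) div s < v" by (simp add: div_less_iff_less_mult mult.commute s2 less_le_trans[OF _ s2] )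
      thus ?thesis using False unfolding F_def by auto
    qed
    show "F b \<noteq> {}" using gS[of b] unfolding F_def SS_def by auto
  next
    fix p q assume p: "p < v" and q: "q < v"
    have split: "{b. b < m \<and> p \<in> F b \<and> q \<in> F b} =
      {b. b < M \<and> (p \<in> g b \<and> q \<in> g b)} \<union> {b. M \<le> b \<and> b < M + s * v \<and> (b - M) div s = p \<and> q = p}"
      unfolding F_def m_def by auto
    have c1: "card {b. b < M \<and> (p \<in> g b \<and> q \<in> g b)} = 2 ^ (v - card {p, q})"
    proof -
      have "{B \<in> SS. p \<in> B \<and> q \<in> B} = {B. B \<subseteq> {..<v} \<and> {p, q} \<subseteq> B}"
        unfolding SS_def by auto
      thus ?thesis using cntg[of "\<lambda>B. p \<in> B \<and> q \<in> B"] card_supsets[of "{..<v}" "{p,q}"] p q by simp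
    qed
    have c2: "card {b. M \<le> b \<and> b < M + s * v \<and> (b - M) div s = p \<and> q = p} = (if p = q then s else 0)"
      using card_block_range[of s p v M] s2 p by (cases "p = q") auto
    have "card {b. b < m \<and> p \<in> F b \<and> q \<in> F b} = 2 ^ (v - card {p, q}) + (if p = q then s else 0)"
      unfolding split by (subst card_Un_disjoint) (auto simp: c1 c2)
    also have "\<dots> = (if p = q then \<beta>^2 else \<beta>)"
    proof (cases "p = q")
      case True
      have "2 ^ (a + 3) \<le> (2::nat) ^ (2 * a + 4)" by (intro power_increasing) auto
      moreover have "\<beta>^2 = 2 ^ (2 * a + 4)" unfolding \<beta>_def power_mult[symmetric] by (simp add: algebra_simps power_add)
      moreover have "v - 1 = a + 3" unfolding v_def by simp
      ultimately show ?thesis using True unfolding s_def by simp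
    next
      case False
      thus ?thesis unfolding v_def \<beta>_def by simp
    qed
    finally show "card {b. b < m \<and> p \<in> F b \<and> q \<in> F b} = (if p = q then \<beta>^2 else \<beta>)" .
  next
    have "2 * 1 \<le> s * v" by (rule mult_le_mono) (use s2 in \<open>auto simp: v_def\<close>)
    hence "M < m" "M + 1 < m" unfolding m_def by linarith+
    moreover have "F M = F (M + 1)" unfolding F_def using s2 by simp
    ultimately show "\<exists>b1<m. \<exists>b2<m. b1 \<noteq> b2 \<and> F b1 = F b2" by (intro exI[of _ M] exI[of _ "M+1"]) auto
  qed
  moreover have "{1..v} \<subseteq> (\<lambda>b. card (F b)) ` {..<m}"
  proof
    fix j assume j: "j \<in> {1..v}"
    have "0 \<in> {..<j}" using j by auto
    hence "{..<j} \<in> SS" using j unfolding SS_def by auto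
    hence "{..<j} \<in> g ` {0..<M}" using bij_betw_imp_surj_on[OF g] by simp
    then obtain b where b: "b < M" "g b = {..<j}" by auto
    hence "card (F b) = j" unfolding F_def by simp
    moreover have "b < m" using b unfolding m_def by simp
    ultimately show "j \<in> (\<lambda>b. card (F b)) ` {..<m}" by force
  qed
  ultimately show ?thesis unfolding v_def \<beta>_def by blast
qed


theorem theorem9:
  fixes t :: int
  shows "\<exists>(n::nat) (E :: nat \<Rightarrow> nat \<Rightarrow> bool).
           simple_graph n E \<and> connected_graph n E \<and> \<not> bipartite_graph n E \<and>
           card (graph_eigenvalues n E) = 4 \<and>
           int (card (valencies n E)) \<ge> t"
proof -
  define a where "a = nat t"
  obtain m F where d: "dsgn (a + 4) m F (2 ^ (a + 2))" and sz: "{1..a + 4} \<subseteq> (\<lambda>b. card (F b)) ` {..<m}"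
    using construction[of a] by blast
  interpret dsgn "a + 4" m F "2 ^ (a + 2)" by (rule d)
  have fin: "finite (valencies (a + 4 + m) (GE (a + 4) F))" unfolding valencies_def by simp
  have "card {1..a + 4} \<le> card (valencies (a + 4 + m) (GE (a + 4) F))"
    by (rule card_mono[OF fin]) (use sz vals in blast)
  hence "a + 4 \<le> card (valencies (a + 4 + m) (GE (a + 4) F))" by simp
  hence "int (card (valencies (a + 4 + m) (GE (a + 4) F))) \<ge> t" unfolding a_def by linarith
  thus ?thesis using simple conn not_bip card_eigs by blast
qed

end
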